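(* Let $p$ be a prime and $k,\ell$ integers with $k>0$, $\ell\ge 0$; put $q=p^k$ and $Q=p^{\ell}$. Then the following are equivalent: (1) $\gcd(q-1,Q+1)=1$, or equivalently $p=2$ and $\operatorname{ord}_2(k)\le\operatorname{ord}_2(\ell)$; (2) $f_1(X)=X^{q^2Q+q}+X^{qQ+q^2}+X^{Q+1}$ permutes $\mathbb{F}_{q^3}$; (3) $f_2(X)=X^{q^2Q+1}+X^{qQ+1}+X^{Q+q^2}+X^{Q+q}-X^{Q+1}$ permutes $\mathbb{F}_{q^3}$; (4) $f_3(X)=X^{q^2Q+q}+X^{qQ+q}+X^{Q+q^2}-X^{Q+q}+X^{Q+1}$ permutes $\mathbb{F}_{q^3}$; (5) $f_4(X)=X^{q^2Q+q^2}+X^{qQ+q^2}-X^{Q+q^2}+X^{Q+q}+X^{Q+1}$ permutes $\mathbb{F}_{q^3}$.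
   Context: A polynomial permutes $\mathbb{F}_{q^3}$ if the induced map $\mathbb{F}_{q^3}\to\mathbb{F}_{q^3}$ is a bijection. For a nonzero integer $N$, $\operatorname{ord}_2(N)$ is the largest integer $s\ge0$ with $2^s\mid N$, and $\operatorname{ord}_2(0)=\infty$. *)

theory Defs
  imports "HOL-Computational_Algebra.Primes" "HOL-Library.Extended_Nat"
begin

definition ord2 :: "nat \<Rightarrow> enat" where
  "ord2 N = (if N = 0 then \<infinity> else enat (multiplicity (2::nat) N))"

end

theory Submission
  imports Defs "HOL-Computational_Algebra.Polynomial" "HOL-Number_Theory.Cong"
begin


lemma ff_fermat:
  fixes x :: "'a::{finite,field}"
  shows "x ^ card (UNIV :: 'a set) = x"
proof (cases "x = 0")
  case False
  have "x * (\<Prod>y\<in>UNIV-{0}. x * y) = x * x ^ (card (UNIV :: 'a set) - 1) * \<Prod>(UNIV-{0})"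
    by (simp add: prod.distrib mult_ac)
  also have "x * x ^ (card (UNIV :: 'a set) - 1) = x ^ Suc (card (UNIV :: 'a set) - 1)"
    by (subst power_Suc) auto
  also have "Suc (card (UNIV :: 'a set) - 1) = card (UNIV :: 'a set)"
    using finite_UNIV_card_ge_0[where ?'a = 'a] by simp
  also have "(\<Prod>y\<in>UNIV-{0}. x * y) = (\<Prod>y\<in>UNIV-{0}. y)"
    by (rule prod.reindex_bij_witness[of _ "\<lambda>y. y / x" "\<lambda>y. x * y"]) (use False in auto)
  finally show ?thesis
    by simp
qed (use finite_UNIV_card_ge_0[where ?'a = 'a] in auto)

lemma ff_fermat_pow:
  fixes x :: "'a::{finite,field}"
  shows "x ^ (card (UNIV :: 'a set) ^ n) = x"
  by (induction n) (simp_all add: ff_fermat power_mult)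

lemma ff_char:
  shows "of_nat (card (UNIV :: 'a::{finite,field} set)) = (0::'a)"
proof -
  have "(\<Sum>y\<in>(UNIV::'a set). y + 1) = (\<Sum>y\<in>UNIV. y)"
    by (rule sum.reindex_bij_witness[of _ "\<lambda>y. y - 1" "\<lambda>y. y + 1"]) auto
  then show ?thesis by (simp add: sum.distrib)
qed

lemma char2_frob:
  fixes x y :: "'a::comm_ring_1"
  assumes "(2::'a) = 0"
  shows "(x + y) ^ (2 ^ j) = x ^ (2 ^ j) + y ^ (2 ^ j)"
proof (induction j)
  case 0 then show ?case by simp
next
  case (Suc j)
  have sq: "(a + b)^2 = a^2 + b^2" for a b :: 'a
  proof -
    have "(a+b)^2 = a^2 + b^2 + 2*a*b" by (simp add: power2_eq_square algebra_simps)
    then show ?thesis by (simp only: assms mult_zero_left mult_zero_right add_0_right)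
  qed
  have "(x + y) ^ (2 ^ Suc j) = ((x+y)^(2^j))^2" by (simp add: power_mult[symmetric] mult.commute)
  also have "\<dots> = (x^(2^j))^2 + (y^(2^j))^2" using Suc sq by simp
  also have "\<dots> = x ^ (2 ^ Suc j) + y ^ (2 ^ Suc j)" by (simp add: power_mult[symmetric] mult.commute)
  finally show ?case .
qed

lemma char2_minus:
  fixes x :: "'a::comm_ring_1"
  assumes "(2::'a) = 0"
  shows "- x = x"
proof -
  have "x + x = 2 * x" by (rule mult_2[symmetric])
  also have "\<dots> = 0" by (simp only: assms mult_zero_left)
  finally have "x + x = 0" .
  then show ?thesis by (metis add_eq_0_iff)
qed

lemma char2_diff:
  fixes x y :: "'a::comm_ring_1"
  assumes "(2::'a) = 0"
  shows "x - y = x + y"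
  by (metis char2_minus[OF assms] diff_conv_add_uminus)

lemma char2_frob_diff:
  fixes x y :: "'a::comm_ring_1"
  assumes "(2::'a) = 0"
  shows "(x - y) ^ (2 ^ j) = x ^ (2 ^ j) - y ^ (2 ^ j)"
  by (simp only: char2_diff[OF assms] char2_frob[OF assms])

lemma char2_frob_inj:
  fixes x y :: "'a::idom"
  assumes "(2::'a) = 0" and "x ^ (2 ^ j) = y ^ (2 ^ j)"
  shows "x = y"
proof -
  have "(x - y) ^ (2 ^ j) = 0" by (simp only: char2_frob_diff[OF assms(1)] assms(2) diff_self)
  then show ?thesis by simp
qed

lemma pow_one_plus:
  fixes x :: "'a::monoid_mult"
  assumes "x ^ N = x" "N \<ge> 1"
  shows "x ^ (1 + j * (N - 1)) = x"
proof (induction j)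
  case 0 then show ?case by simp
next
  case (Suc j)
  have e: "1 + Suc j * (N - 1) = (1 + j * (N - 1)) + (N - 1)" by simp
  have "x ^ (1 + Suc j * (N - 1)) = x ^ (1 + j * (N - 1)) * x ^ (N - 1)"
    unfolding e by (rule power_add)
  also have "\<dots> = x * x ^ (N - 1)" using Suc by simp
  also have "\<dots> = x ^ N" using assms(2) by (metis power_Suc Suc_diff_le diff_Suc_1 le_add_diff_inverse2 plus_1_eq_Suc)
  finally show ?case using assms by simp
qed

lemma coprime_inverse_exp:
  fixes e M :: nat
  assumes "coprime e M" "M \<ge> 1" "e > 0"
  shows "\<exists>d j. e * d = 1 + j * M"
proof -
  obtain x y where "e * x = M * y + gcd e M" using bezout_nat[of e M] assms(3) by auto
  then have "e * x = 1 + y * M" using assms(1) by (simp add: mult.commute)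
  then show ?thesis by blast
qed

lemma pow_inj_gen:
  fixes x y :: "'a::comm_monoid_mult"
  assumes "\<And>z::'a. z ^ N = z" "N \<ge> 2" "coprime e (N - 1)" "x ^ e = y ^ e" "e > 0"
  shows "x = y"
proof -
  obtain d j where dj: "e * d = 1 + j * (N - 1)" using coprime_inverse_exp[OF assms(3) _ assms(5)] assms(2) by fastforce
  have "x = x ^ (e * d)" using pow_one_plus[of x N j] assms(1,2) dj by simp
  also have "\<dots> = (x ^ e) ^ d" by (simp add: power_mult)
  also have "\<dots> = (y ^ e) ^ d" using assms(4) by simp
  also have "\<dots> = y" using pow_one_plus[of y N j] assms(1,2) dj by (simp add: power_mult[symmetric])
  finally show ?thesis .
qed



datatype 'a om = Om (re: 'a) (im: 'a)

instantiation om :: (comm_ring_1) comm_ring_1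
begin
definition "0 = Om 0 0"
definition "1 = Om 1 0"
definition "x + y = Om (re x + re y) (im x + im y)"
definition "- x = Om (- re x) (- im x)"
definition "x - y = Om (re x - re y) (im x - im y)"
definition "x * y = Om (re x * re y - im x * im y) (re x * im y + im x * re y - im x * im y)"
instance
proof
  fix a b c :: "'a om"
  show "a * b * c = a * (b * c)"
    by (cases a; cases b; cases c) (simp add: times_om_def algebra_simps)
  show "a * b = b * a"
    by (cases a; cases b) (simp add: times_om_def algebra_simps)
  show "1 * a = a"
    by (cases a) (simp add: times_om_def one_om_def)
  show "(a + b) * c = a * c + b * c"
    by (cases a; cases b; cases c) (simp add: times_om_def plus_om_def algebra_simps)
  show "a + b + c = a + (b + c)"
    by (simp add: plus_om_def algebra_simps)
  show "a + b = b + a"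
    by (simp add: plus_om_def algebra_simps)
  show "0 + a = a"
    by (cases a) (simp add: plus_om_def zero_om_def)
  show "- a + a = 0"
    by (cases a) (simp add: plus_om_def zero_om_def uminus_om_def)
  show "a - b = a + - b"
    by (simp add: plus_om_def minus_om_def uminus_om_def)
  show "(0::'a om) \<noteq> 1"
    by (simp add: zero_om_def one_om_def)
qed
end

definition emb :: "'a::comm_ring_1 \<Rightarrow> 'a om" where "emb c = Om c 0"
definition ww :: "'a::comm_ring_1 om" where "ww = Om 0 1"

lemma emb_add: "emb (x + y) = emb x + emb y" by (simp add: emb_def plus_om_def)
lemma emb_mult: "emb (x * y) = emb x * emb y" by (simp add: emb_def times_om_def)
lemma emb_one: "emb 1 = 1" by (simp add: emb_def one_om_def)
lemma emb_zero: "emb 0 = 0" by (simp add: emb_def zero_om_def)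
lemma emb_pow: "emb (x ^ n) = emb x ^ n"
  by (induction n) (simp_all add: emb_one emb_mult)
lemma emb_inj: "emb x = emb y \<longleftrightarrow> x = y" by (simp add: emb_def)
lemma om_decomp: "Om c d = emb c + emb d * ww"
  by (simp add: emb_def ww_def times_om_def plus_om_def)
lemma om_of_nat: "(of_nat n :: 'a::comm_ring_1 om) = emb (of_nat n)"
  by (induction n) (simp_all add: emb_add emb_one emb_zero)
lemma om_char2:
  assumes "(2::'a::comm_ring_1) = 0" shows "(2::'a om) = 0"
proof -
  have "(2::'a om) = of_nat 2" by simp
  also have "\<dots> = emb (of_nat 2)" by (rule om_of_nat)
  also have "\<dots> = emb 2" by simp
  also have "\<dots> = 0" by (simp only: assms emb_zero)
  finally show ?thesis .
qed

lemma ww_sq: "(ww::'a::comm_ring_1 om)^2 = - 1 - ww"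
  by (simp add: ww_def power2_eq_square times_om_def one_om_def minus_om_def uminus_om_def)
lemma ww_cube: "(ww::'a::comm_ring_1 om)^3 = 1"
proof -
  have "(ww::'a om)^3 = ww^2 * ww" by (simp add: power_Suc2 numeral_3_eq_3 power2_eq_square)
  also have "\<dots> = (- 1 - ww) * ww" by (simp add: ww_sq)
  also have "\<dots> = - ww - ww^2" by (simp add: algebra_simps power2_eq_square)
  also have "\<dots> = 1" by (simp add: ww_sq)
  finally show ?thesis .
qed

lemma ww_pow_mod3: "(ww::'a::comm_ring_1 om) ^ n = ww ^ (n mod 3)"
proof -
  have "(ww::'a om) ^ n = ww ^ (3 * (n div 3) + n mod 3)" by simp
  also have "\<dots> = (ww^3)^(n div 3) * ww ^ (n mod 3)" by (simp only: power_add power_mult)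
  also have "\<dots> = ww ^ (n mod 3)" by (simp add: ww_cube)
  finally show ?thesis .
qed

lemma two_pow_mod3: "(2::nat) ^ j mod 3 = (if even j then 1 else 2)"
proof (induction j)
  case 0 then show ?case by simp
next
  case (Suc j)
  have "(2::nat) ^ Suc j mod 3 = (2 * (2 ^ j mod 3)) mod 3" by (simp add: mod_mult_right_eq)
  then show ?case using Suc by auto
qed

lemma ww_pow2: "(ww::'a::comm_ring_1 om) ^ (2 ^ j) = (if even j then ww else ww^2)"
  using ww_pow_mod3[of "2^j"] two_pow_mod3[of j] by (simp split: if_splits)

lemma om_frob:
  fixes c d :: "'a::comm_ring_1"
  assumes "(2::'a) = 0"
  shows "(emb c + emb d * ww) ^ (2 ^ j) = emb (c ^ (2^j)) + emb (d ^ (2^j)) * ww ^ (2 ^ j)"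
proof -
  have "(emb c + emb d * ww) ^ (2 ^ j) = (emb c) ^ (2 ^ j) + (emb d * ww) ^ (2 ^ j)"
    by (rule char2_frob[OF om_char2[OF assms]])
  then show ?thesis by (simp add: power_mult_distrib emb_pow)
qed

lemma om_fermat:
  assumes "(2::'a::comm_ring_1) = 0" and "\<And>c::'a. c ^ (2 ^ m) = c" and "even m"
  shows "(z::'a om) ^ (2 ^ m) = z"
proof (cases z)
  case (Om c d)
  show ?thesis unfolding Om om_decomp om_frob[OF assms(1)] assms(2) ww_pow2 using assms(3) by simp
qed



lemma char2_bit0:
  assumes h: "(2::'a::comm_ring_1) = 0"
  shows "(numeral (num.Bit0 n) :: 'a) = 0"
proof -
  have "(numeral (num.Bit0 n) :: 'a) = 2 * numeral n"
    by (subst mult_2) (rule numeral_Bit0)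
  then show ?thesis by (simp only: h mult_zero_left)
qed

lemma char2_bit1:
  assumes h: "(2::'a::comm_ring_1) = 0"
  shows "(numeral (num.Bit1 n) :: 'a) = 1"
proof -
  have "(numeral (num.Bit1 n) :: 'a) = numeral (num.Bit0 n) + 1"
    by (simp only: numeral_Bit1 numeral_Bit0)
  then show ?thesis by (simp only: char2_bit0[OF h] add_0)
qed

lemmas char2_simps = char2_bit0 char2_bit1

lemma coord_id1:
  fixes X Y XQ YQ :: "'a::comm_ring_1"
  assumes h: "(2::'a) = 0"
  shows "(emb (YQ + XQ) + emb XQ * ww) * (emb (Y + X) + emb X * ww)
     = emb (XQ * X + YQ * Y) + ww^2 * emb (YQ * Y + (XQ + YQ) * (X + Y))"
  by (simp add: emb_def ww_def times_om_def plus_om_def power2_eq_square algebra_simps char2_simps[OF h])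

lemma coord_id2:
  fixes X Y XQ YQ :: "'a::comm_ring_1"
  assumes h: "(2::'a) = 0"
  shows "(emb YQ + emb XQ * ww) * (emb (X + Y) + emb Y * ww)
     = ww^2 * (emb (XQ * X + YQ * Y) + ww * emb (YQ * Y + (XQ + YQ) * (X + Y)))"
  by (simp add: emb_def ww_def times_om_def plus_om_def power2_eq_square algebra_simps char2_simps[OF h])

lemma coord_id3:
  fixes X XQ YQ :: "'a::comm_ring_1"
  assumes h: "(2::'a) = 0"
  shows "emb (YQ + XQ) + emb XQ * ww^2 = emb YQ + emb XQ * ww"
  by (simp add: emb_def ww_def times_om_def plus_om_def power2_eq_square algebra_simps char2_simps[OF h])

lemma coord_id4:
  fixes X Y :: "'a::comm_ring_1"
  assumes h: "(2::'a) = 0"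
  shows "emb ((X + Y) + Y) + emb Y * ww^2 = emb (X + Y) + emb Y * ww"
  by (simp add: emb_def ww_def times_om_def plus_om_def power2_eq_square algebra_simps char2_simps[OF h])

lemma im_a: "im (emb (Y + X) + emb X * ww) = X"
  by (simp add: emb_def ww_def times_om_def plus_om_def)

definition Hf :: "nat \<Rightarrow> nat \<Rightarrow> 'a::comm_ring_1 \<Rightarrow> 'a" where
  "Hf k l u = u^(2^l) * u + (u^(2^k))^(2^l) * u^(2^k)"

lemma pow_comm: "((x::'a::monoid_mult) ^ m) ^ n = (x ^ n) ^ m"
  by (simp add: power_mult[symmetric] mult.commute)

lemma Hf_frob:
  fixes u :: "'a::comm_ring_1"
  assumes h: "(2::'a) = 0" and kt: "(u^(2^k))^(2^k) = u + u^(2^k)"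
  shows "(Hf k l u)^(2^k) = (u^(2^k))^(2^l) * u^(2^k) + (u^(2^l) + (u^(2^k))^(2^l)) * (u + u^(2^k))"
proof -
  have "(Hf k l u)^(2^k) = ((u^(2^l))^(2^k) * u^(2^k)) + (((u^(2^k))^(2^l))^(2^k) * (u^(2^k))^(2^k))"
    unfolding Hf_def by (simp only: char2_frob[OF h] power_mult_distrib)
  also have "((u^(2^k))^(2^l))^(2^k) = (u + u^(2^k))^(2^l)"
    by (simp only: pow_comm[of "u^(2^k)"] kt)
  also have "\<dots> = u^(2^l) + (u^(2^k))^(2^l)" by (rule char2_frob[OF h])
  also have "(u^(2^l))^(2^k) = (u^(2^k))^(2^l)" by (rule pow_comm)
  finally show ?thesis by (simp only: kt)
qed

lemma a_powQ_even:
  fixes X Y :: "'a::comm_ring_1"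
  assumes h: "(2::'a) = 0" and "even l"
  shows "(emb (Y + X) + emb X * ww)^(2^l) = emb (Y^(2^l) + X^(2^l)) + emb (X^(2^l)) * ww"
  using assms by (simp add: om_frob[OF h] ww_pow2 char2_frob[OF h])

lemma a_powQ_odd:
  fixes X Y :: "'a::comm_ring_1"
  assumes h: "(2::'a) = 0" and "odd l"
  shows "(emb (Y + X) + emb X * ww)^(2^l) = emb (Y^(2^l)) + emb (X^(2^l)) * ww"
  using assms by (simp add: om_frob[OF h] ww_pow2 char2_frob[OF h] coord_id3[OF h])

lemma a_powq_odd:
  fixes X :: "'a::comm_ring_1"
  assumes h: "(2::'a) = 0" and "odd k" and kt: "(X^(2^k))^(2^k) = X + X^(2^k)"
  shows "(emb (X^(2^k) + X) + emb X * ww)^(2^k) = emb (X + X^(2^k)) + emb (X^(2^k)) * ww"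
proof -
  have "(emb (X^(2^k) + X) + emb X * ww)^(2^k) = emb ((X + X^(2^k)) + X^(2^k)) + emb (X^(2^k)) * ww^2"
    using assms by (simp add: om_frob[OF h] ww_pow2 char2_frob[OF h])
  then show ?thesis by (simp only: coord_id4[OF h])
qed

lemma key_even:
  fixes u :: "'a::comm_ring_1"
  assumes h: "(2::'a) = 0" and kt: "(u^(2^k))^(2^k) = u + u^(2^k)" and l: "even l"
  shows "(emb (u^(2^k) + u) + emb u * ww)^(2^l+1) = emb (Hf k l u) + ww^2 * emb ((Hf k l u)^(2^k))"
proof -
  let ?lhs = "(emb (u^(2^k) + u) + emb u * ww)^(2^l+1)"
  let ?rhs = "emb (u^(2^l) * u + (u^(2^k))^(2^l) * u^(2^k)) + ww^2 * emb ((u^(2^k))^(2^l) * u^(2^k) + (u^(2^l) + (u^(2^k))^(2^l)) * (u + u^(2^k)))"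
  have "(emb (u^(2^k) + u) + emb u * ww)^(2^l+1) = (emb (u^(2^k) + u) + emb u * ww)^(2^l) * (emb (u^(2^k) + u) + emb u * ww)"
    by (simp only: power_add power_one_right)
  also have "\<dots> = (emb ((u^(2^k))^(2^l) + u^(2^l)) + emb (u^(2^l)) * ww) * (emb (u^(2^k) + u) + emb u * ww)"
    by (simp only: a_powQ_even[OF h l])
  also have "\<dots> = emb (u^(2^l) * u + (u^(2^k))^(2^l) * u^(2^k)) + ww^2 * emb ((u^(2^k))^(2^l) * u^(2^k) + (u^(2^l) + (u^(2^k))^(2^l)) * (u + u^(2^k)))"
    by (rule coord_id1[OF h])
  finally have r: "?lhs = ?rhs" .
  show ?thesis unfolding Hf_frob[OF h kt] unfolding Hf_def by (rule r)
qed

lemma key_odd: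
  fixes u :: "'a::comm_ring_1"
  assumes h: "(2::'a) = 0" and kt: "(u^(2^k))^(2^k) = u + u^(2^k)" and l: "odd l" and k: "odd k"
  shows "(emb (u^(2^k) + u) + emb u * ww)^(2^l+2^k) = ww^2 * (emb (Hf k l u) + ww * emb ((Hf k l u)^(2^k)))"
proof -
  let ?lhs = "(emb (u^(2^k) + u) + emb u * ww)^(2^l+2^k)"
  let ?rhs = "ww^2 * (emb (u^(2^l) * u + (u^(2^k))^(2^l) * u^(2^k)) + ww * emb ((u^(2^k))^(2^l) * u^(2^k) + (u^(2^l) + (u^(2^k))^(2^l)) * (u + u^(2^k))))"
  have "(emb (u^(2^k) + u) + emb u * ww)^(2^l+2^k) = (emb (u^(2^k) + u) + emb u * ww)^(2^l) * (emb (u^(2^k) + u) + emb u * ww)^(2^k)"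
    by (simp only: power_add)
  also have "\<dots> = (emb ((u^(2^k))^(2^l)) + emb (u^(2^l)) * ww) * (emb (u + u^(2^k)) + emb (u^(2^k)) * ww)"
    by (simp only: a_powQ_odd[OF h l] a_powq_odd[OF h k kt])
  also have "\<dots> = ww^2 * (emb (u^(2^l) * u + (u^(2^k))^(2^l) * u^(2^k)) + ww * emb ((u^(2^k))^(2^l) * u^(2^k) + (u^(2^l) + (u^(2^k))^(2^l)) * (u + u^(2^k))))"
    by (rule coord_id2[OF h])
  finally have r: "?lhs = ?rhs" .
  show ?thesis unfolding Hf_frob[OF h kt] unfolding Hf_def by (rule r)
qed

lemma H_inj_even:
  fixes u v :: "'a::comm_ring_1"
  assumes h: "(2::'a) = 0" and ku: "(u^(2^k))^(2^k) = u + u^(2^k)" and kv: "(v^(2^k))^(2^k) = v + v^(2^k)"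
    and l: "even l" and ferm: "\<And>z::'a om. z ^ N = z" and N: "N \<ge> 2"
    and cop: "coprime (2^l+1) (N - 1)" and eq: "Hf k l u = Hf k l v"
  shows "u = v"
proof -
  have "(emb (u^(2^k) + u) + emb u * ww)^(2^l+1) = (emb (v^(2^k) + v) + emb v * ww)^(2^l+1)"
    by (simp only: key_even[OF h ku l] key_even[OF h kv l] eq)
  then have "emb (u^(2^k) + u) + emb u * ww = emb (v^(2^k) + v) + emb v * ww"
    by (rule pow_inj_gen[OF ferm N cop]) simp
  then have "im (emb (u^(2^k) + u) + emb u * ww) = im (emb (v^(2^k) + v) + emb v * ww)" by simp
  then show ?thesis by (simp only: im_a)
qed

lemma H_inj_odd:
  fixes u v :: "'a::comm_ring_1"
  assumes h: "(2::'a) = 0" and ku: "(u^(2^k))^(2^k) = u + u^(2^k)" and kv: "(v^(2^k))^(2^k) = v + v^(2^k)"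
    and l: "odd l" and k: "odd k" and ferm: "\<And>z::'a om. z ^ N = z" and N: "N \<ge> 2"
    and cop: "coprime (2^l+2^k) (N - 1)" and eq: "Hf k l u = Hf k l v"
  shows "u = v"
proof -
  have "(emb (u^(2^k) + u) + emb u * ww)^(2^l+2^k) = (emb (v^(2^k) + v) + emb v * ww)^(2^l+2^k)"
    by (simp only: key_odd[OF h ku l k] key_odd[OF h kv l k] eq)
  then have "emb (u^(2^k) + u) + emb u * ww = emb (v^(2^k) + v) + emb v * ww"
    by (rule pow_inj_gen[OF ferm N cop]) simp
  then have "im (emb (u^(2^k) + u) + emb u * ww) = im (emb (v^(2^k) + v) + emb v * ww)" by simp
  then show ?thesis by (simp only: im_a)
qed



lemma inj_from_red:
  fixes F :: "'a::comm_ring_1 \<Rightarrow> 'a"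
  assumes red: "\<And>x. F x = G (U x) + P (T x)"
    and Kred: "\<And>x. F x + (F x)^(2^k) = K (U x)"
    and Kinj: "\<And>x y. K (U x) = K (U y) \<Longrightarrow> U x = U y"
    and Pinj: "\<And>x y. P (T x) = P (T y) \<Longrightarrow> T x = T y"
    and dec: "\<And>x. x = U x + T x"
  shows "inj F"
proof (rule injI)
  fix x y assume e: "F x = F y"
  then have "K (U x) = K (U y)" using Kred[of x] Kred[of y] by simp
  then have u: "U x = U y" by (rule Kinj)
  then have "P (T x) = P (T y)" using e red[of x] red[of y] by simp
  then have "T x = T y" by (rule Pinj)
  then show "x = y" using u dec[of x] dec[of y] by simp
qed

lemma idf1:
  fixes u0 u1 v0 v1 t tQ :: "'a::comm_ring_1"
  assumes h: "(2::'a) = 0"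
  shows "(v0 + v1 + tQ) * (u1 + t) + (v1 + tQ) * (u0 + u1 + t) + (v0 + tQ) * (u0 + t)
       = (v0 * u1 + v1 * u0 + v0 * u0) + tQ * t"
  by (simp add: algebra_simps char2_simps[OF h])

lemma idf2:
  fixes u0 u1 v0 v1 t tQ :: "'a::comm_ring_1"
  assumes h: "(2::'a) = 0"
  shows "(v0 + v1 + tQ) * (u0 + t) + (v1 + tQ) * (u0 + t) + (v0 + tQ) * (u0 + u1 + t)
     + (v0 + tQ) * (u1 + t) - (v0 + tQ) * (u0 + t) = v0 * u0 + tQ * t"
  by (simp add: algebra_simps char2_simps[OF h])

lemma idf3:
  fixes u0 u1 v0 v1 t tQ :: "'a::comm_ring_1"
  assumes h: "(2::'a) = 0"
  shows "(v0 + v1 + tQ) * (u1 + t) + (v1 + tQ) * (u1 + t) + (v0 + tQ) * (u0 + u1 + t)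
     - (v0 + tQ) * (u1 + t) + (v0 + tQ) * (u0 + t) = v0 * u1 + tQ * t"
  by (simp add: algebra_simps char2_simps[OF h])

lemma idf4:
  fixes u0 u1 v0 v1 t tQ :: "'a::comm_ring_1"
  assumes h: "(2::'a) = 0"
  shows "(v0 + v1 + tQ) * (u0 + u1 + t) + (v1 + tQ) * (u0 + u1 + t) - (v0 + tQ) * (u0 + u1 + t)
     + (v0 + tQ) * (u1 + t) + (v0 + tQ) * (u0 + t) = v0 * u0 + v0 * u1 + tQ * t"
  by (simp add: algebra_simps char2_simps[OF h])

lemma idg1:
  fixes u0 u1 v0 v1 :: "'a::comm_ring_1"
  assumes h: "(2::'a) = 0"
  shows "(v0 * u1 + v1 * u0 + v0 * u0) + (v1 * (u0 + u1) + (v0 + v1) * u1 + v1 * u1) = v0 * u0 + v1 * u1"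
  by (simp add: algebra_simps char2_simps[OF h])

lemma idg3:
  fixes u0 u1 v0 v1 :: "'a::comm_ring_1"
  assumes h: "(2::'a) = 0"
  shows "v0 * u1 + v1 * (u0 + u1) = (v0 + v1) * (u0 + u1) + v0 * u0"
  by (simp add: algebra_simps char2_simps[OF h])

lemma idg4:
  fixes u0 u1 v0 v1 :: "'a::comm_ring_1"
  assumes h: "(2::'a) = 0"
  shows "(v0 * u0 + v0 * u1) + (v1 * u1 + v1 * (u0 + u1)) = v1 * u1 + (v0 + v1) * (u0 + u1)"
  by (simp add: algebra_simps char2_simps[OF h])

lemma char2_add_self:
  fixes a :: "'a::comm_ring_1"
  assumes h: "(2::'a) = 0"
  shows "a + a = 0"
  by (metis mult_2 h mult_zero_left)



lemma red_setup:
  fixes x :: "'a::comm_ring_1"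
  assumes h: "(2::'a) = 0" and ferm: "x2^(2^k) = x"
    and d1: "x1 = x^(2^k)" and d2: "x2 = x1^(2^k)" and dt: "t = x + x1 + x2"
    and du: "u = x + t" and du1: "u1 = u^(2^k)"
  shows "t^(2^k) = t" "u1^(2^k) = u + u1" "x = u + t" "x1 = u1 + t" "x2 = u + u1 + t"
proof -
  have a: "\<And>a::'a. a + a = 0" by (rule char2_add_self[OF h])
  have "t^(2^k) = x^(2^k) + x1^(2^k) + x2^(2^k)" unfolding dt by (simp only: char2_frob[OF h])
  also have "\<dots> = x1 + x2 + x" by (simp only: d1[symmetric] d2[symmetric] ferm)
  also have "\<dots> = t" by (simp add: dt add_ac)
  finally show tq: "t^(2^k) = t" .
  have uq: "u1 = x1 + t" unfolding du1 du by (simp add: char2_frob[OF h] d1[symmetric] tq)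
  show "x = u + t" unfolding du by (simp add: add.assoc a)
  show "x1 = u1 + t" unfolding uq by (simp add: add.assoc a)
  show "x2 = u + u1 + t" unfolding uq du dt by (simp add: algebra_simps char2_simps[OF h])
  have "u1^(2^k) = x2 + t" by (simp only: uq char2_frob[OF h] d2[symmetric] tq)
  also have "\<dots> = u + u1" unfolding uq du dt by (simp add: algebra_simps char2_simps[OF h])
  finally show "u1^(2^k) = u + u1" .
qed

lemma mono_eqs:
  fixes x :: "'a::comm_ring_1" and q Q :: nat
  shows "x^(q^2*Q+q) = ((x^q)^q)^Q * x^q" "x^(q*Q+q^2) = (x^q)^Q * (x^q)^q" "x^(Q+1) = x^Q * x"
    "x^(q^2*Q+1) = ((x^q)^q)^Q * x" "x^(q*Q+1) = (x^q)^Q * x" "x^(Q+q^2) = x^Q * (x^q)^q"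
    "x^(Q+q) = x^Q * x^q" "x^(q*Q+q) = (x^q)^Q * x^q" "x^(q^2*Q+q^2) = ((x^q)^q)^Q * (x^q)^q"
  by (simp_all only: power_add power_mult power2_eq_square power_one_right)

lemma frob_atoms:
  fixes u :: "'a::comm_ring_1"
  assumes h: "(2::'a) = 0" and du1: "u1 = u^(2^k)" and k2: "u1^(2^k) = u + u1"
  shows "(u^(2^l))^(2^k) = u1^(2^l)" "(u1^(2^l))^(2^k) = u^(2^l) + u1^(2^l)"
proof -
  show "(u^(2^l))^(2^k) = u1^(2^l)" unfolding du1 by (rule pow_comm)
  have "(u1^(2^l))^(2^k) = (u1^(2^k))^(2^l)" by (rule pow_comm)
  also have "\<dots> = u^(2^l) + u1^(2^l)" unfolding k2 by (rule char2_frob[OF h])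
  finally show "(u1^(2^l))^(2^k) = u^(2^l) + u1^(2^l)" .
qed

lemma f_inj_generic:
  fixes q Q :: nat and F G K :: "'a::field \<Rightarrow> 'a"
  assumes h: "(2::'a) = 0" and q: "q = 2^k" and Q: "Q = 2^l"
    and ferm: "\<And>x::'a. ((x^q)^q)^q = x"
    and Pinj: "\<And>s t::'a. s^(Q+1) = t^(Q+1) \<Longrightarrow> s = t"
    and red: "\<And>x u t u1. t = x + x^q + (x^q)^q \<Longrightarrow> u = x + t \<Longrightarrow> u1 = u^q \<Longrightarrow>
        x = u + t \<Longrightarrow> x^q = u1 + t \<Longrightarrow> (x^q)^q = u + u1 + t \<Longrightarrow> F x = G u + t^Q * t"
    and Gq: "\<And>u u1. u1 = u^q \<Longrightarrow> u1^q = u + u1 \<Longrightarrow> G u + (G u)^q = K u"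
    and Kinj: "\<And>u v. (u^q)^q = u + u^q \<Longrightarrow> (v^q)^q = v + v^q \<Longrightarrow> K u = K v \<Longrightarrow> u = v"
  shows "inj F"
proof -
  define T :: "'a \<Rightarrow> 'a" where "T x = x + x^q + (x^q)^q" for x
  define U :: "'a \<Rightarrow> 'a" where "U x = x + T x" for x
  define P :: "'a \<Rightarrow> 'a" where "P t = t^Q * t" for t
  have a: "\<And>a::'a. a + a = 0" by (rule char2_add_self[OF h])
  have fr: "(a + b)^q = a^q + b^q" for a b :: 'a using char2_frob[OF h, of a b k] q by simp
  have facts: "T x^q = T x \<and> ((U x)^q)^q = U x + (U x)^q \<and> x = U x + T x \<and> x^q = (U x)^q + T x
     \<and> (x^q)^q = U x + (U x)^q + T x" for x
    using red_setup[OF h, of "(x^q)^q" k x "x^q" "T x" "U x" "(U x)^q"] ferm[of x] q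
    unfolding T_def U_def by simp
  have redx: "F x = G (U x) + P (T x)" for x
    unfolding P_def by (rule red) (use facts[of x] in \<open>auto simp: T_def U_def\<close>)
  have Kred: "F x + (F x)^(2^k) = K (U x)" for x
  proof -
    obtain u t u1 where e: "u = U x" "t = T x" "u1 = u^q" by blast
    have tq: "t^q = t" and k2: "u1^q = u + u1" using facts[of x] e by auto
    have Pq: "(P t)^q = P t" unfolding P_def
      by (simp only: power_mult_distrib pow_comm[of t Q q] tq)
    have "(G u + P t) + (G u + P t)^(2^k) = (G u + (G u)^q) + (P t + P t)"
      unfolding q[symmetric] by (simp only: fr Pq add_ac)
    also have "\<dots> = G u + (G u)^q" by (simp add: a)
    also have "\<dots> = K u" by (rule Gq[OF e(3) k2])
    finally show ?thesis using redx[of x] e by simp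
  qed
  show ?thesis
    apply (rule inj_from_red[where G=G and U=U and P=P and T=T and k=k and K=K])
    subgoal by (rule redx)
    subgoal by (rule Kred)
    subgoal using Kinj facts by blast
    subgoal using Pinj unfolding P_def by (metis power_add power_one_right)
    subgoal using facts by blast
    done
qed

lemma f1_inj:
  fixes q Q :: nat
  assumes h: "(2::'a::field) = 0" and q: "q = 2^k" and Q: "Q = 2^l"
    and ferm: "\<And>x::'a. ((x^q)^q)^q = x"
    and Hinj: "\<And>u v::'a. (u^q)^q = u + u^q \<Longrightarrow> (v^q)^q = v + v^q \<Longrightarrow> Hf k l u = Hf k l v \<Longrightarrow> u = v"
    and Pinj: "\<And>s t::'a. s^(Q+1) = t^(Q+1) \<Longrightarrow> s = t"
  shows "inj (\<lambda>x::'a. x ^ (q^2 * Q + q) + x ^ (q * Q + q^2) + x ^ (Q + 1))"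
proof (rule f_inj_generic[OF h q Q ferm Pinj, where G="\<lambda>u. u^Q * u^q + (u^q)^Q * u + u^Q * u" and K="Hf k l"])
  fix x u t u1 :: 'a
  assume e: "u1 = u^q" and f: "x = u + t" "x^q = u1 + t" "(x^q)^q = u + u1 + t"
  have "x ^ (q^2 * Q + q) + x ^ (q * Q + q^2) + x ^ (Q + 1) = ((x^q)^q)^Q * x^q + (x^q)^Q * (x^q)^q + x^Q * x"
    by (simp only: mono_eqs(1,2)[where q=q and Q=Q] mono_eqs(3)[where Q=Q])
  also have "\<dots> = (u + u1 + t)^Q * (u1 + t) + (u1 + t)^Q * (u + u1 + t) + (u + t)^Q * (u + t)"
    by (simp only: f(3), simp only: f(2), simp only: f(1))
  also have "\<dots> = (u^Q + u1^Q + t^Q) * (u1 + t) + (u1^Q + t^Q) * (u + u1 + t) + (u^Q + t^Q) * (u + t)"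
    by (simp only: Q char2_frob[OF h])
  also have "\<dots> = (u^Q * u1 + u1^Q * u + u^Q * u) + t^Q * t" by (rule idf1[OF h])
  finally show "x ^ (q^2 * Q + q) + x ^ (q * Q + q^2) + x ^ (Q + 1) = (u^Q * u^q + (u^q)^Q * u + u^Q * u) + t^Q * t"
    using e by simp
next
  fix u u1 :: 'a
  assume e: "u1 = u^q" and k2: "u1^q = u + u1"
  have fr: "(a + b)^q = a^q + b^q" for a b :: 'a using char2_frob[OF h, of a b k] q by simp
  have fa: "(u^Q)^q = u1^Q" "(u1^Q)^q = u^Q + u1^Q"
    using frob_atoms[OF h, of u1 u k l] e k2 q Q by auto
  have Gu: "u^Q * u^q + (u^q)^Q * u + u^Q * u = u^Q * u1 + u1^Q * u + u^Q * u" unfolding e ..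
  have Gq: "(u^Q * u1 + u1^Q * u + u^Q * u)^q = u1^Q * (u + u1) + (u^Q + u1^Q) * u1 + u1^Q * u1"
    by (simp only: fr power_mult_distrib fa k2 e[symmetric])
  show "(u^Q * u^q + (u^q)^Q * u + u^Q * u) + (u^Q * u^q + (u^q)^Q * u + u^Q * u)^q = Hf k l u"
    unfolding Gu Gq Hf_def e[symmetric] q[symmetric] Q[symmetric] by (rule idg1[OF h])
next
  fix u v :: 'a
  assume "(u^q)^q = u + u^q" "(v^q)^q = v + v^q" "Hf k l u = Hf k l v"
  then show "u = v" by (rule Hinj)
qed



lemma idg3':
  fixes u0 u1 v0 v1 :: "'a::comm_ring_1"
  assumes h: "(2::'a) = 0"
  shows "v0 * u1 + v1 * (u0 + u1) = (v0 + v1) * (u0 + u1) + (v1 + (v0 + v1)) * (u1 + (u0 + u1))"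
  by (simp add: algebra_simps char2_simps[OF h])

lemma f2_inj:
  fixes q Q :: nat
  assumes h: "(2::'a::field) = 0" and q: "q = 2^k" and Q: "Q = 2^l"
    and ferm: "\<And>x::'a. ((x^q)^q)^q = x"
    and Hinj: "\<And>u v::'a. (u^q)^q = u + u^q \<Longrightarrow> (v^q)^q = v + v^q \<Longrightarrow> Hf k l u = Hf k l v \<Longrightarrow> u = v"
    and Pinj: "\<And>s t::'a. s^(Q+1) = t^(Q+1) \<Longrightarrow> s = t"
  shows "inj (\<lambda>x::'a. x ^ (q^2 * Q + 1) + x ^ (q * Q + 1) + x ^ (Q + q^2) + x ^ (Q + q) - x ^ (Q + 1))"
proof (rule f_inj_generic[OF h q Q ferm Pinj, where G="\<lambda>u. u^Q * u" and K="Hf k l"])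
  fix x u t u1 :: 'a
  assume e: "u1 = u^q" and f: "x = u + t" "x^q = u1 + t" "(x^q)^q = u + u1 + t"
  have "x ^ (q^2 * Q + 1) + x ^ (q * Q + 1) + x ^ (Q + q^2) + x ^ (Q + q) - x ^ (Q + 1)
     = ((x^q)^q)^Q * x + (x^q)^Q * x + x^Q * (x^q)^q + x^Q * x^q - x^Q * x"
    by (simp only: mono_eqs(4,5,6,7)[where q=q and Q=Q] mono_eqs(3)[where Q=Q])
  also have "\<dots> = (u + u1 + t)^Q * (u + t) + (u1 + t)^Q * (u + t) + (u + t)^Q * (u + u1 + t) + (u + t)^Q * (u1 + t) - (u + t)^Q * (u + t)"
    by (simp only: f(3), simp only: f(2), simp only: f(1))
  also have "\<dots> = (u^Q + u1^Q + t^Q) * (u + t) + (u1^Q + t^Q) * (u + t) + (u^Q + t^Q) * (u + u1 + t) + (u^Q + t^Q) * (u1 + t) - (u^Q + t^Q) * (u + t)"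
    by (simp only: Q char2_frob[OF h])
  also have "\<dots> = u^Q * u + t^Q * t" by (rule idf2[OF h])
  finally show "x ^ (q^2 * Q + 1) + x ^ (q * Q + 1) + x ^ (Q + q^2) + x ^ (Q + q) - x ^ (Q + 1) = u^Q * u + t^Q * t" .
next
  fix u u1 :: 'a
  assume e: "u1 = u^q" and k2: "u1^q = u + u1"
  have "(u^Q * u)^q = u1^Q * u1"
    by (simp only: power_mult_distrib pow_comm[of u Q q] e[symmetric])
  then show "u^Q * u + (u^Q * u)^q = Hf k l u"
    unfolding Hf_def e q[symmetric] Q[symmetric] by simp
next
  fix u v :: 'a
  assume "(u^q)^q = u + u^q" "(v^q)^q = v + v^q" "Hf k l u = Hf k l v"
  then show "u = v" by (rule Hinj)
qed

lemma f3_inj: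
  fixes q Q :: nat
  assumes h: "(2::'a::field) = 0" and q: "q = 2^k" and Q: "Q = 2^l"
    and ferm: "\<And>x::'a. ((x^q)^q)^q = x"
    and Hinj: "\<And>u v::'a. (u^q)^q = u + u^q \<Longrightarrow> (v^q)^q = v + v^q \<Longrightarrow> Hf k l u = Hf k l v \<Longrightarrow> u = v"
    and Pinj: "\<And>s t::'a. s^(Q+1) = t^(Q+1) \<Longrightarrow> s = t"
  shows "inj (\<lambda>x::'a. x ^ (q^2 * Q + q) + x ^ (q * Q + q) + x ^ (Q + q^2) - x ^ (Q + q) + x ^ (Q + 1))"
proof (rule f_inj_generic[OF h q Q ferm Pinj, where G="\<lambda>u. u^Q * u^q" and K="\<lambda>u. ((Hf k l u)^q)^q"])
  fix x u t u1 :: 'a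
  assume e: "u1 = u^q" and f: "x = u + t" "x^q = u1 + t" "(x^q)^q = u + u1 + t"
  have "x ^ (q^2 * Q + q) + x ^ (q * Q + q) + x ^ (Q + q^2) - x ^ (Q + q) + x ^ (Q + 1)
     = ((x^q)^q)^Q * x^q + (x^q)^Q * x^q + x^Q * (x^q)^q - x^Q * x^q + x^Q * x"
    by (simp only: mono_eqs(1,8,6,7)[where q=q and Q=Q] mono_eqs(3)[where Q=Q])
  also have "\<dots> = (u + u1 + t)^Q * (u1 + t) + (u1 + t)^Q * (u1 + t) + (u + t)^Q * (u + u1 + t) - (u + t)^Q * (u1 + t) + (u + t)^Q * (u + t)"
    by (simp only: f(3), simp only: f(2), simp only: f(1))
  also have "\<dots> = (u^Q + u1^Q + t^Q) * (u1 + t) + (u1^Q + t^Q) * (u1 + t) + (u^Q + t^Q) * (u + u1 + t) - (u^Q + t^Q) * (u1 + t) + (u^Q + t^Q) * (u + t)"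
    by (simp only: Q char2_frob[OF h])
  also have "\<dots> = u^Q * u1 + t^Q * t" by (rule idf3[OF h])
  finally show "x ^ (q^2 * Q + q) + x ^ (q * Q + q) + x ^ (Q + q^2) - x ^ (Q + q) + x ^ (Q + 1) = u^Q * u^q + t^Q * t"
    using e by simp
next
  fix u u1 :: 'a
  assume e: "u1 = u^q" and k2: "u1^q = u + u1"
  have fr: "(a + b)^q = a^q + b^q" for a b :: 'a using char2_frob[OF h, of a b k] q by simp
  have fa: "(u^Q)^q = u1^Q" "(u1^Q)^q = u^Q + u1^Q"
    using frob_atoms[OF h, of u1 u k l] e k2 q Q by auto
  have kt: "(u^(2^k))^(2^k) = u + u^(2^k)" using k2 e q by simp
  have H1: "(Hf k l u)^q = u1^Q * u1 + (u^Q + u1^Q) * (u + u1)"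
    using Hf_frob[OF h kt, of l] e q Q by simp
  have H2: "((Hf k l u)^q)^q = (u^Q + u1^Q) * (u + u1) + (u1^Q + (u^Q + u1^Q)) * (u1 + (u + u1))"
    unfolding H1 by (simp only: fr power_mult_distrib fa k2 e[symmetric])
  have G: "(u^Q * u1)^q = u1^Q * (u + u1)"
    by (simp only: power_mult_distrib fa k2)
  show "u^Q * u^q + (u^Q * u^q)^q = ((Hf k l u)^q)^q"
    unfolding H2 e[symmetric] G by (rule idg3'[OF h])
next
  fix u v :: 'a
  assume a: "(u^q)^q = u + u^q" "(v^q)^q = v + v^q" and hh: "((Hf k l u)^q)^q = ((Hf k l v)^q)^q"
  have "((Hf k l u)^q)^(2^k) = ((Hf k l v)^q)^(2^k)" using hh by (simp only: q)
  then have "(Hf k l u)^q = (Hf k l v)^q" by (rule char2_frob_inj[OF h])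
  then have "(Hf k l u)^(2^k) = (Hf k l v)^(2^k)" by (simp only: q)
  then have "Hf k l u = Hf k l v" by (rule char2_frob_inj[OF h])
  then show "u = v" by (rule Hinj[OF a(1) a(2)])
qed

lemma f4_inj:
  fixes q Q :: nat
  assumes h: "(2::'a::field) = 0" and q: "q = 2^k" and Q: "Q = 2^l"
    and ferm: "\<And>x::'a. ((x^q)^q)^q = x"
    and Hinj: "\<And>u v::'a. (u^q)^q = u + u^q \<Longrightarrow> (v^q)^q = v + v^q \<Longrightarrow> Hf k l u = Hf k l v \<Longrightarrow> u = v"
    and Pinj: "\<And>s t::'a. s^(Q+1) = t^(Q+1) \<Longrightarrow> s = t"
  shows "inj (\<lambda>x::'a. x ^ (q^2 * Q + q^2) + x ^ (q * Q + q^2) - x ^ (Q + q^2) + x ^ (Q + q) + x ^ (Q + 1))"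
proof (rule f_inj_generic[OF h q Q ferm Pinj, where G="\<lambda>u. u^Q * u + u^Q * u^q" and K="\<lambda>u. (Hf k l u)^q"])
  fix x u t u1 :: 'a
  assume e: "u1 = u^q" and f: "x = u + t" "x^q = u1 + t" "(x^q)^q = u + u1 + t"
  have "x ^ (q^2 * Q + q^2) + x ^ (q * Q + q^2) - x ^ (Q + q^2) + x ^ (Q + q) + x ^ (Q + 1)
     = ((x^q)^q)^Q * (x^q)^q + (x^q)^Q * (x^q)^q - x^Q * (x^q)^q + x^Q * x^q + x^Q * x"
    by (simp only: mono_eqs(9,2,6,7)[where q=q and Q=Q] mono_eqs(3)[where Q=Q])
  also have "\<dots> = (u + u1 + t)^Q * (u + u1 + t) + (u1 + t)^Q * (u + u1 + t) - (u + t)^Q * (u + u1 + t) + (u + t)^Q * (u1 + t) + (u + t)^Q * (u + t)"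
    by (simp only: f(3), simp only: f(2), simp only: f(1))
  also have "\<dots> = (u^Q + u1^Q + t^Q) * (u + u1 + t) + (u1^Q + t^Q) * (u + u1 + t) - (u^Q + t^Q) * (u + u1 + t) + (u^Q + t^Q) * (u1 + t) + (u^Q + t^Q) * (u + t)"
    by (simp only: Q char2_frob[OF h])
  also have "\<dots> = u^Q * u + u^Q * u1 + t^Q * t" by (rule idf4[OF h])
  finally show "x ^ (q^2 * Q + q^2) + x ^ (q * Q + q^2) - x ^ (Q + q^2) + x ^ (Q + q) + x ^ (Q + 1) = (u^Q * u + u^Q * u^q) + t^Q * t"
    using e by simp
next
  fix u u1 :: 'a
  assume e: "u1 = u^q" and k2: "u1^q = u + u1"
  have fr: "(a + b)^q = a^q + b^q" for a b :: 'a using char2_frob[OF h, of a b k] q by simp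
  have fa: "(u^Q)^q = u1^Q" "(u1^Q)^q = u^Q + u1^Q"
    using frob_atoms[OF h, of u1 u k l] e k2 q Q by auto
  have kt: "(u^(2^k))^(2^k) = u + u^(2^k)" using k2 e q by simp
  have H1: "(Hf k l u)^q = u1^Q * u1 + (u^Q + u1^Q) * (u + u1)"
    using Hf_frob[OF h kt, of l] e q Q by simp
  have G: "(u^Q * u + u^Q * u1)^q = u1^Q * u1 + u1^Q * (u + u1)"
    by (simp only: fr power_mult_distrib fa k2 e[symmetric])
  show "(u^Q * u + u^Q * u^q) + (u^Q * u + u^Q * u^q)^q = (Hf k l u)^q"
    unfolding H1 e[symmetric] G by (rule idg4[OF h])
next
  fix u v :: 'a
  assume a: "(u^q)^q = u + u^q" "(v^q)^q = v + v^q" and hh: "(Hf k l u)^q = (Hf k l v)^q"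
  have "(Hf k l u)^(2^k) = (Hf k l v)^(2^k)" using hh by (simp only: q)
  then have "Hf k l u = Hf k l v" by (rule char2_frob_inj[OF h])
  then show "u = v" by (rule Hinj[OF a(1) a(2)])
qed



lemma nt_core:
  fixes m n d n' :: nat
  assumes nd: "n = d * n'" and odd: "odd n'" and dm: "d dvd m" and np: "n > 0"
  shows "coprime ((2::nat)^m + 1) (2^n - 1)"
proof (rule coprimeI)
  fix c :: nat assume c1: "c dvd 2^m + 1" and c2: "c dvd 2^n - 1"
  obtain m'' where m: "m = d * m''" using dm by blast
  have "int c dvd int (2^m + 1)" using c1 by (simp only: int_dvd_int_iff)
  then have "int c dvd (2::int)^m + 1" by (simp add: add.commute)
  then have a: "[(2::int)^m = -1] (mod int c)" by (simp add: cong_iff_dvd_diff)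
  have "int c dvd int (2^n - 1)" using c2 by (simp only: int_dvd_int_iff)
  moreover have "int (2^n - 1) = (2::int)^n - 1" by (simp add: of_nat_diff)
  ultimately have "int c dvd (2::int)^n - 1" by simp
  then have b: "[(2::int)^n = 1] (mod int c)" by (simp add: cong_iff_dvd_diff)
  have "[((2::int)^m)^n' = (-1)^n'] (mod int c)" by (rule cong_pow[OF a])
  then have a2: "[((2::int)^m)^n' = -1] (mod int c)" using odd by simp
  have "[((2::int)^n)^m'' = 1^m''] (mod int c)" by (rule cong_pow[OF b])
  then have b2: "[((2::int)^n)^m'' = 1] (mod int c)" by simp
  have "((2::int)^m)^n' = ((2::int)^n)^m''" by (simp add: m nd power_mult[symmetric] mult_ac)
  then have "[-1 = (1::int)] (mod int c)" using a2 b2 by (metis cong_sym cong_trans)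
  then have "int c dvd 2" by (simp add: cong_iff_dvd_diff)
  then have c2': "c dvd 2" by (metis int_dvd_int_iff of_nat_numeral)
  have "odd ((2::nat)^n - 1)" using np by simp
  then have "odd c" using c2 dvd_trans by blast
  moreover have "c \<le> 2" using c2' by (simp add: dvd_imp_le)
  ultimately have "c = 1" by (cases "c = 0 \<or> c = 1 \<or> c = 2") auto
  then show "is_unit c" by simp
qed

lemma nt_not:
  fixes m n d a b :: nat
  assumes m: "m = d * a" and a: "odd a" and n: "n = 2 * d * b" and d: "d > 0"
  shows "\<not> coprime ((2::nat)^m + 1) (2^n - 1)"
proof
  assume cop: "coprime ((2::nat)^m + 1) (2^n - 1)"
  let ?c = "(2::nat)^d + 1"
  have "(2::int)^d - (-1) = int ?c" by simp
  then have base: "[(2::int)^d = -1] (mod int ?c)" unfolding cong_iff_dvd_diff by (metis dvd_refl)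
  have "[((2::int)^d)^a = (-1)^a] (mod int ?c)" by (rule cong_pow[OF base])
  then have "[(2::int)^m = -1] (mod int ?c)" using a by (simp add: m power_mult)
  then have "int ?c dvd (2::int)^m + 1" by (simp add: cong_iff_dvd_diff)
  then have "int ?c dvd int (2^m + 1)" by (simp add: add.commute)
  then have d1: "?c dvd 2^m + 1" by (simp only: int_dvd_int_iff)
  have "[((2::int)^d)^(2*b) = (-1)^(2*b)] (mod int ?c)" by (rule cong_pow[OF base])
  moreover have "((2::int)^d)^(2*b) = 2^n"
  proof -
    have "n = d * (2*b)" using n by simp
    then show ?thesis by (simp only: power_mult)
  qed
  moreover have "(-1::int)^(2*b) = 1" by simp
  ultimately have "[(2::int)^n = 1] (mod int ?c)" by simp
  then have "int ?c dvd (2::int)^n - 1" by (simp add: cong_iff_dvd_diff)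
  moreover have "int (2^n - 1) = (2::int)^n - 1" by (simp add: of_nat_diff)
  ultimately have d2: "?c dvd 2^n - 1" by (metis int_dvd_int_iff)
  have "?c = 1" using coprime_common_divisor_nat[OF cop d1 d2] .
  then show False using d by simp
qed

lemma pdvd2: "n \<noteq> 0 \<Longrightarrow> (2::nat)^j dvd n \<longleftrightarrow> j \<le> multiplicity 2 n"
  by (rule power_dvd_iff_le_multiplicity) auto

lemma mgt2: "n \<noteq> 0 \<Longrightarrow> multiplicity (2::nat) n > 0 \<longleftrightarrow> 2 dvd n"
  by (rule multiplicity_gt_zero_iff) auto

lemma mult2_decomp:
  fixes n :: nat
  assumes "n > 0"
  shows "n = 2 ^ multiplicity 2 n * (n div 2 ^ multiplicity 2 n)" "odd (n div 2 ^ multiplicity 2 n)"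
proof -
  have "\<not> 2 dvd (n div 2^multiplicity 2 n)" by (rule multiplicity_decompose) (use assms in auto)
  then show "odd (n div 2 ^ multiplicity 2 n)" by simp
  show "n = 2 ^ multiplicity 2 n * (n div 2 ^ multiplicity 2 n)"
    using multiplicity_dvd[where p=2 and x=n] by simp
qed

lemma gcd_char:
  fixes k l :: nat
  assumes k: "k > 0"
  shows "coprime ((2::nat)^l + 1) (2^k - 1) \<longleftrightarrow> ord2 k \<le> ord2 l"
proof
  assume cop: "coprime ((2::nat)^l + 1) (2^k - 1)"
  show "ord2 k \<le> ord2 l"
  proof (rule ccontr)
    assume "\<not> ord2 k \<le> ord2 l"
    then have l0: "l \<noteq> 0" and lt: "multiplicity 2 l < multiplicity 2 k"
      using k by (auto simp: ord2_def split: if_splits)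
    define d where "d = (2::nat) ^ multiplicity 2 l"
    have l: "l = d * (l div d)" "odd (l div d)" using mult2_decomp[of l] l0 by (auto simp: d_def)
    have "2 ^ Suc (multiplicity 2 l) dvd k" using lt
      using pdvd2[of k "Suc (multiplicity 2 l)"] k lt by simp
    then obtain b where "k = 2 ^ Suc (multiplicity 2 l) * b" by blast
    then have kb: "k = 2 * d * b" by (simp add: d_def)
    have "\<not> coprime ((2::nat)^l + 1) (2^k - 1)"
      by (rule nt_not[OF l(1) l(2) kb]) (simp add: d_def)
    then show False using cop by simp
  qed
next
  assume le: "ord2 k \<le> ord2 l"
  define d where "d = (2::nat) ^ multiplicity 2 k"
  have kd: "k = d * (k div d)" "odd (k div d)" using mult2_decomp[of k] k by (auto simp: d_def)
  have "d dvd l"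
  proof (cases "l = 0")
    case False
    then have "multiplicity 2 k \<le> multiplicity 2 l" using le k by (simp add: ord2_def)
    then show ?thesis using pdvd2[of l] False by (simp add: d_def)
  qed simp
  then show "coprime ((2::nat)^l + 1) (2^k - 1)" using nt_core[OF kd(1) kd(2)] k by simp
qed

lemma mult2_3: "multiplicity (2::nat) (3 * k) = multiplicity 2 k"
proof (cases "k = 0")
  case False
  have "multiplicity (2::nat) (3 * k) = multiplicity (2::nat) 3 + multiplicity 2 k"
    by (rule prime_elem_multiplicity_mult_distrib[of "2::nat" 3 k]) (use False in auto)
  moreover have "multiplicity (2::nat) 3 = 0" by (simp add: not_dvd_imp_multiplicity_0)
  ultimately show ?thesis by simp
qed simp

lemma cond_3k:
  assumes "k > 0" "ord2 k \<le> ord2 l"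
  shows "coprime ((2::nat)^l + 1) (2^(3*k) - 1)"
proof -
  have "ord2 (3*k) = ord2 k" using assms(1) by (simp add: ord2_def mult2_3)
  then show ?thesis using gcd_char[of "3*k" l] assms by simp
qed

lemma cond_even:
  assumes "k > 0" "ord2 k \<le> ord2 l" "even k"
  shows "even l"
proof (cases "l = 0")
  case False
  have "multiplicity 2 k \<le> multiplicity 2 l" using assms False by (simp add: ord2_def)
  moreover have "multiplicity (2::nat) k > 0" using assms mgt2[of k] by simp
  ultimately have "multiplicity (2::nat) l > 0" by simp
  then show ?thesis using mgt2[of l] False by simp
qed simp

lemma cond_odd_even:
  assumes "odd k" "even l"
  shows "coprime ((2::nat)^l + 1) (2^(6*k) - 1)"
  by (rule nt_core[of _ 2 "3*k"]) (use assms odd_pos[OF assms(1)] in auto)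

lemma cond_odd_odd:
  assumes "odd k" "odd l"
  shows "coprime ((2::nat)^l + 2^k) (2^(6*k) - 1)"
proof -
  have oddN: "odd ((2::nat)^(6*k) - 1)" using assms odd_pos[OF assms(1)] by simp
  have c2: "coprime ((2::nat)^j) (2^(6*k) - 1)" for j
    using oddN by simp
  consider "l = k" | "l > k" | "l < k" by linarith
  then show ?thesis
  proof cases
    case 1
    then have e: "(2::nat)^l + 2^k = 2^(Suc k)" by simp
    show ?thesis unfolding e by (rule c2)
  next
    case 2
    then have e: "(2::nat)^l + 2^k = 2^k * (2^(l-k) + 1)"
      by (simp add: algebra_simps power_add[symmetric])
    have A: "coprime ((2::nat)^(l-k) + 1) (2^(6*k) - 1)"
      by (rule nt_core[of _ 2 "3*k"]) (use assms 2 odd_pos[OF assms(1)] in auto)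
    show ?thesis unfolding e coprime_mult_left_iff using c2[of k] A by blast
  next
    case 3
    then have e: "(2::nat)^l + 2^k = 2^l * (2^(k-l) + 1)"
      by (simp add: algebra_simps power_add[symmetric])
    have A: "coprime ((2::nat)^(k-l) + 1) (2^(6*k) - 1)"
      by (rule nt_core[of _ 2 "3*k"]) (use assms 3 odd_pos[OF assms(1)] in auto)
    show ?thesis unfolding e coprime_mult_left_iff using c2[of l] A by blast
  qed
qed



lemma ff_unit_pow:
  fixes x :: "'a::{finite,field}"
  assumes "x \<noteq> 0"
  shows "x ^ (card (UNIV :: 'a set) - 1) = 1"
proof -
  have n: "card (UNIV :: 'a set) \<ge> 1" using finite_UNIV_card_ge_0[where ?'a='a] by simp
  have "x * x ^ (card (UNIV :: 'a set) - 1) = x ^ card (UNIV :: 'a set)"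
    using n by (metis Suc_diff_le diff_Suc_1 power_Suc)
  also have "\<dots> = x * 1" by (simp add: ff_fermat)
  finally show ?thesis using assms by simp
qed

lemma exists_root_unity:
  fixes d :: nat
  assumes dvd: "d dvd (card (UNIV::'a::{finite,field} set) - 1)" and d1: "d > 1"
  shows "\<exists>z::'a. z \<noteq> 1 \<and> z ^ d = 1"
proof (rule ccontr)
  assume no: "\<not> (\<exists>z::'a. z \<noteq> 1 \<and> z ^ d = 1)"
  define N where "N = card (UNIV::'a set) - 1"
  obtain M where NM: "N = d * M" using dvd unfolding N_def by blast
  have card2: "card (UNIV::'a set) \<ge> 2"
  proof -
    have "{0::'a, 1} \<subseteq> UNIV" by simp
    then have "card {0::'a, 1} \<le> card (UNIV::'a set)" by (intro card_mono) auto
    then show ?thesis by simp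
  qed
  then have Npos: "N > 0" unfolding N_def by simp
  then have M1: "M \<ge> 1" using NM by (cases M) auto
  have MN: "M < N" using NM d1 M1 by simp
  have allM: "x ^ M = 1" if "x \<noteq> 0" for x :: 'a
  proof -
    have "(x ^ M) ^ d = x ^ N" by (simp add: NM power_mult[symmetric] mult.commute)
    also have "\<dots> = 1" unfolding N_def by (rule ff_unit_pow[OF that])
    finally show ?thesis using no by blast
  qed
  define P :: "'a poly" where "P = [:-1:] + monom 1 M"
  have degP: "degree P = M" unfolding P_def
    using M1 by (subst degree_add_eq_right) (simp_all add: degree_monom_eq)
  have P0: "P \<noteq> 0" using degP M1 by auto
  have roots: "UNIV - {0} \<subseteq> {x. poly P x = 0}"
    using allM by (auto simp: P_def poly_monom)
  have "card (UNIV - {0::'a}) \<le> card {x. poly P x = 0}"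
    by (rule card_mono[OF _ roots]) simp
  also have "\<dots> \<le> M" using card_poly_roots_bound[OF P0] degP by simp
  finally have "N \<le> M" unfolding N_def by (simp add: card_Diff_singleton)
  then show False using MN by simp
qed

lemma cube_minus_one_dvd:
  fixes q :: nat
  shows "q - 1 dvd q^3 - 1"
proof (cases q)
  case 0 then show ?thesis by simp
next
  case (Suc r)
  have "(Suc r)^3 - 1 = r * (r*r + 3*r + 3)" by (simp add: power3_eq_cube algebra_simps)
  then show ?thesis using Suc by simp
qed

lemma bad_root:
  fixes q Q :: nat
  assumes card: "card (UNIV::'a::{finite,field} set) = q^3" and q1: "q \<ge> 1"
    and nc: "\<not> coprime (q - 1) (Q + 1)"
  shows "\<exists>z::'a. z \<noteq> 1 \<and> z ^ q = z \<and> z ^ Q * z = 1"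
proof -
  define d where "d = gcd (q - 1) (Q + 1)"
  have d1: "d > 1"
  proof -
    have "d \<noteq> 0" unfolding d_def by simp
    moreover have "d \<noteq> 1" using nc unfolding d_def by (simp add: coprime_iff_gcd_eq_1)
    ultimately show ?thesis by simp
  qed
  have "d dvd q - 1" unfolding d_def by simp
  also have "q - 1 dvd q^3 - 1" by (rule cube_minus_one_dvd)
  finally have "d dvd card (UNIV::'a set) - 1" using card by simp
  then obtain z :: 'a where z: "z \<noteq> 1" "z ^ d = 1" using exists_root_unity d1 by blast
  obtain a where a: "q - 1 = d * a" using \<open>d dvd q - 1\<close> by (rule dvdE)
  have "d dvd Q + 1" unfolding d_def by simp
  then obtain b where b: "Q + 1 = d * b" by (rule dvdE)
  have "z ^ (q - 1) = (z ^ d) ^ a" by (simp only: a power_mult)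
  then have "z ^ (q - 1) = 1" by (simp add: z(2))
  moreover obtain r where r: "q = Suc r" using q1 by (cases q) auto
  ultimately have "z ^ q = z" by simp
  moreover have "z ^ Q * z = 1"
  proof -
    have "z ^ Q * z = z ^ (Q + 1)" by simp
    also have "\<dots> = (z ^ d) ^ b" by (simp only: b power_mult)
    also have "\<dots> = 1" by (simp add: z(2))
    finally show ?thesis .
  qed
  ultimately show ?thesis using z(1) by blast
qed

lemma bad_f_eq:
  fixes z :: "'a::comm_ring_1"
  assumes zq: "z ^ q = z" and zQ: "z ^ Q * z = 1"
  shows "z ^ (q^2 * Q + q) + z ^ (q * Q + q^2) + z ^ (Q + 1)
           = (1::'a) ^ (q^2 * Q + q) + 1 ^ (q * Q + q^2) + 1 ^ (Q + 1)"
    "z ^ (q^2 * Q + 1) + z ^ (q * Q + 1) + z ^ (Q + q^2) + z ^ (Q + q) - z ^ (Q + 1)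
       = (1::'a) ^ (q^2 * Q + 1) + 1 ^ (q * Q + 1) + 1 ^ (Q + q^2) + 1 ^ (Q + q) - 1 ^ (Q + 1)"
    "z ^ (q^2 * Q + q) + z ^ (q * Q + q) + z ^ (Q + q^2) - z ^ (Q + q) + z ^ (Q + 1)
       = (1::'a) ^ (q^2 * Q + q) + 1 ^ (q * Q + q) + 1 ^ (Q + q^2) - 1 ^ (Q + q) + 1 ^ (Q + 1)"
    "z ^ (q^2 * Q + q^2) + z ^ (q * Q + q^2) - z ^ (Q + q^2) + z ^ (Q + q) + z ^ (Q + 1)
       = (1::'a) ^ (q^2 * Q + q^2) + 1 ^ (q * Q + q^2) - 1 ^ (Q + q^2) + 1 ^ (Q + q) + 1 ^ (Q + 1)"
  by (simp_all only: mono_eqs(1,2,4,5,6,7,8,9)[where q=q and Q=Q] mono_eqs(3)[where Q=Q] zq zQ power_one mult_1_left)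



lemma bij_iff_inj_fin: "bij (f :: 'a::finite \<Rightarrow> 'a) \<longleftrightarrow> inj f"
  using finite_UNIV_inj_surj[of f] by (auto simp: bij_def)

theorem corollary1p2:
  fixes p k l :: nat
  assumes "prime p" and "k > 0"
    and "card (UNIV :: 'a::{finite,field} set) = p ^ (3 * k)"
  shows "let q = p ^ k; Q = p ^ l in
    ((gcd (q - 1) (Q + 1) = 1) \<longleftrightarrow> (p = 2 \<and> ord2 k \<le> ord2 l))
    \<and> ((gcd (q - 1) (Q + 1) = 1) \<longleftrightarrow>
         bij (\<lambda>x::'a. x ^ (q^2 * Q + q) + x ^ (q * Q + q^2) + x ^ (Q + 1)))
    \<and> ((gcd (q - 1) (Q + 1) = 1) \<longleftrightarrow>
         bij (\<lambda>x::'a. x ^ (q^2 * Q + 1) + x ^ (q * Q + 1) + x ^ (Q + q^2)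
                       + x ^ (Q + q) - x ^ (Q + 1)))
    \<and> ((gcd (q - 1) (Q + 1) = 1) \<longleftrightarrow>
         bij (\<lambda>x::'a. x ^ (q^2 * Q + q) + x ^ (q * Q + q) + x ^ (Q + q^2)
                       - x ^ (Q + q) + x ^ (Q + 1)))
    \<and> ((gcd (q - 1) (Q + 1) = 1) \<longleftrightarrow>
         bij (\<lambda>x::'a. x ^ (q^2 * Q + q^2) + x ^ (q * Q + q^2) - x ^ (Q + q^2)
                       + x ^ (Q + q) + x ^ (Q + 1)))"
proof -
  note pr = assms(1) and k0 = assms(2) and card = assms(3)
  define q where "q = p ^ k"
  define Q where "Q = p ^ l"
  have p2: "p \<ge> 2" using pr by (simp add: prime_ge_2_nat)
  have q1: "q \<ge> 1" unfolding q_def using p2 by simp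
  have part1: "(gcd (q - 1) (Q + 1) = 1) \<longleftrightarrow> (p = 2 \<and> ord2 k \<le> ord2 l)"
  proof (cases "p = 2")
    case True
    have "(gcd (q - 1) (Q + 1) = 1) \<longleftrightarrow> coprime ((2::nat)^l + 1) (2^k - 1)"
      unfolding q_def Q_def True by (simp add: coprime_iff_gcd_eq_1 gcd.commute)
    also have "\<dots> \<longleftrightarrow> ord2 k \<le> ord2 l" by (rule gcd_char[OF k0])
    finally show ?thesis using True by simp
  next
    case False
    then have "p > 2" using p2 by simp
    then have op: "odd p" using pr prime_odd_nat by blast
    have "even (q - 1)" unfolding q_def using op p2 k0 by (simp add: Suc_leI)
    moreover have "even (Q + 1)" unfolding Q_def using op by simp
    ultimately have "2 dvd gcd (q - 1) (Q + 1)" by simp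
    then have "gcd (q - 1) (Q + 1) \<noteq> 1" by (metis nat_dvd_1_iff_1 numeral_eq_one_iff semiring_norm(85))
    then show ?thesis using False by simp
  qed
  have cardq: "card (UNIV :: 'a set) = q^3" unfolding q_def using card by (simp add: power_mult[symmetric] mult.commute)
  define f1 :: "'a \<Rightarrow> 'a" where "f1 = (\<lambda>x. x ^ (q^2 * Q + q) + x ^ (q * Q + q^2) + x ^ (Q + 1))"
  define f2 :: "'a \<Rightarrow> 'a" where "f2 = (\<lambda>x. x ^ (q^2 * Q + 1) + x ^ (q * Q + 1) + x ^ (Q + q^2) + x ^ (Q + q) - x ^ (Q + 1))"
  define f3 :: "'a \<Rightarrow> 'a" where "f3 = (\<lambda>x. x ^ (q^2 * Q + q) + x ^ (q * Q + q) + x ^ (Q + q^2) - x ^ (Q + q) + x ^ (Q + 1))"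
  define f4 :: "'a \<Rightarrow> 'a" where "f4 = (\<lambda>x. x ^ (q^2 * Q + q^2) + x ^ (q * Q + q^2) - x ^ (Q + q^2) + x ^ (Q + q) + x ^ (Q + 1))"
  have fwd: "inj f1 \<and> inj f2 \<and> inj f3 \<and> inj f4" if cond: "gcd (q - 1) (Q + 1) = 1"
  proof -
    have pe: "p = 2" and o2: "ord2 k \<le> ord2 l" using cond part1 by auto
    have qk: "q = 2^k" and Ql: "Q = 2^l" unfolding q_def Q_def pe by simp_all
    have card2: "card (UNIV :: 'a set) = 2^(3*k)" using card pe by simp
    have h: "(2::'a) = 0"
    proof -
      have "(of_nat (2^(3*k)) :: 'a) = 0" using ff_char[where 'a='a] card2 by simp
      then have "(2::'a)^(3*k) = 0" by simp
      then show ?thesis by simp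
    qed
    have fermN: "\<And>z::'a. z ^ (2^(3*k)) = z" using ff_fermat[where 'a='a] card2 by simp
    have ferm: "\<And>x::'a. ((x^q)^q)^q = x"
    proof -
      fix x :: 'a
      have e3: "3 * k = k + k + k" by simp
      have "(2::nat)^(3*k) = 2^k * 2^k * 2^k" unfolding e3 by (simp only: power_add)
      then have "((x^q)^q)^q = x ^ (2^(3*k))" unfolding qk by (simp only: power_mult)
      then show "((x^q)^q)^q = x" using fermN by simp
    qed
    have "(2::nat)^1 \<le> 2^(3*k)" by (rule power_increasing) (use k0 in auto)
    then have N2: "(2::nat)^(3*k) \<ge> 2" by simp
    have cop3: "coprime ((2::nat)^l + 1) (2^(3*k) - 1)" by (rule cond_3k[OF k0 o2])
    have Pinj: "\<And>s t::'a. s^(Q+1) = t^(Q+1) \<Longrightarrow> s = t"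
    proof -
      fix s t :: 'a assume st: "s^(Q+1) = t^(Q+1)"
      show "s = t" by (rule pow_inj_gen[OF fermN N2 _ st]) (use cop3 Ql in simp_all)
    qed
    have Hinj: "\<And>u v::'a. (u^q)^q = u + u^q \<Longrightarrow> (v^q)^q = v + v^q \<Longrightarrow> Hf k l u = Hf k l v \<Longrightarrow> u = v"
    proof -
      fix u v :: 'a
      assume ku: "(u^q)^q = u + u^q" and kv: "(v^q)^q = v + v^q" and e: "Hf k l u = Hf k l v"
      have ku': "(u^(2^k))^(2^k) = u + u^(2^k)" using ku qk by simp
      have kv': "(v^(2^k))^(2^k) = v + v^(2^k)" using kv qk by simp
      have ferm6: "\<And>c::'a. c ^ (2^(6*k)) = c"
      proof -
        fix c :: 'a
        have "c ^ (2^(6*k)) = (c ^ (2^(3*k))) ^ (2^(3*k))"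
          by (simp add: power_mult[symmetric] power_add[symmetric])
        then show "c ^ (2^(6*k)) = c" using fermN by simp
      qed
      have "(2::nat)^1 \<le> 2^(6*k)" by (rule power_increasing) (use k0 in auto)
      then have N6: "(2::nat)^(6*k) \<ge> 2" by simp
      show "u = v"
      proof (cases "even k")
        case True
        have le: "even l" by (rule cond_even[OF k0 o2 True])
        have om: "\<And>z::'a om. z ^ (2^(3*k)) = z" by (rule om_fermat[OF h fermN]) (use True in simp)
        show ?thesis by (rule H_inj_even[OF h ku' kv' le om N2 cop3 e])
      next
        case False
        have om: "\<And>z::'a om. z ^ (2^(6*k)) = z" by (rule om_fermat[OF h ferm6]) simp
        show ?thesis
        proof (cases "even l")
          case True
          show ?thesis by (rule H_inj_even[OF h ku' kv' True om N6 cond_odd_even[OF False True] e])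
        next
          case lo: False
          show ?thesis by (rule H_inj_odd[OF h ku' kv' lo False om N6 cond_odd_odd[OF False lo] e])
        qed
      qed
    qed
    show ?thesis unfolding f1_def f2_def f3_def f4_def
      using f1_inj[OF h qk Ql ferm Hinj Pinj] f2_inj[OF h qk Ql ferm Hinj Pinj]
        f3_inj[OF h qk Ql ferm Hinj Pinj] f4_inj[OF h qk Ql ferm Hinj Pinj] by blast
  qed
  have bwd: "\<not> inj f1 \<and> \<not> inj f2 \<and> \<not> inj f3 \<and> \<not> inj f4" if cond: "gcd (q - 1) (Q + 1) \<noteq> 1"
  proof -
    have "\<not> coprime (q - 1) (Q + 1)" using cond by (simp add: coprime_iff_gcd_eq_1)
    then obtain z :: 'a where z: "z \<noteq> 1" "z ^ q = z" "z ^ Q * z = 1"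
      using bad_root[OF cardq q1] by blast
    have "f1 z = f1 1" "f2 z = f2 1" "f3 z = f3 1" "f4 z = f4 1"
      unfolding f1_def f2_def f3_def f4_def using bad_f_eq[OF z(2) z(3)] by simp_all
    then show ?thesis using z(1) by (auto dest: injD)
  qed
  have all: "(gcd (q - 1) (Q + 1) = 1 \<longleftrightarrow> bij f1) \<and> (gcd (q - 1) (Q + 1) = 1 \<longleftrightarrow> bij f2)
     \<and> (gcd (q - 1) (Q + 1) = 1 \<longleftrightarrow> bij f3) \<and> (gcd (q - 1) (Q + 1) = 1 \<longleftrightarrow> bij f4)"
  proof (cases "gcd (q - 1) (Q + 1) = 1")
    case True
    then show ?thesis using fwd[OF True] by (simp add: bij_iff_inj_fin)
  next
    case False
    then show ?thesis using bwd[OF False] by (simp add: bij_iff_inj_fin)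
  qed
  show ?thesis unfolding Let_def q_def[symmetric] Q_def[symmetric]
    using part1 all unfolding f1_def f2_def f3_def f4_def by blast
qed

end
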